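(* Let $G$ be a generalized split graph (GSP graph). Then $p(G)\le 2$.
   Context: A graph $G$ is a GSP (generalized split) graph if either $G$ or its complement $\overline{G}$ has the following form: its vertex set is partitioned into $V_1,V_2$ where $V_1$ spans a complete graph and $V_2$ spans a disjoint union of complete graphs with no edges between them. A comparability graph is a graph admitting a transitive orientation. $p(G)$ is the minimum number $m$ such that $E(G)$ is the union of the edge sets of $m$ pairwise edge-disjoint comparability subgraphs of $G$. *)

theory Defs
  imports Main
begin

definition simple_graph :: "'a set \<Rightarrow> 'a set set \<Rightarrow> bool" where
  "simple_graph V E \<longleftrightarrow> finite V \<and>
     (\<forall>e\<in>E. \<exists>u v. u \<in> V \<and> v \<in> V \<and> u \<noteq> v \<and> e = {u, v})"

definition compl_edges :: "'a set \<Rightarrow> 'a set set \<Rightarrow> 'a set set" where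
  "compl_edges V E = {{u, v} | u v. u \<in> V \<and> v \<in> V \<and> u \<noteq> v \<and> {u, v} \<notin> E}"

definition is_clique :: "'a set set \<Rightarrow> 'a set \<Rightarrow> bool" where
  "is_clique E S \<longleftrightarrow> (\<forall>u\<in>S. \<forall>v\<in>S. u \<noteq> v \<longrightarrow> {u, v} \<in> E)"

definition union_of_cliques :: "'a set set \<Rightarrow> 'a set \<Rightarrow> bool" where
  "union_of_cliques E S \<longleftrightarrow> (\<exists>P. \<Union>P = S \<and> {} \<notin> P \<and>
     (\<forall>A\<in>P. \<forall>B\<in>P. A \<noteq> B \<longrightarrow> A \<inter> B = {}) \<and>
     (\<forall>A\<in>P. is_clique E A) \<and>
     (\<forall>A\<in>P. \<forall>B\<in>P. A \<noteq> B \<longrightarrow> (\<forall>u\<in>A. \<forall>v\<in>B. {u, v} \<notin> E)))"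

definition split_form :: "'a set \<Rightarrow> 'a set set \<Rightarrow> bool" where
  "split_form V E \<longleftrightarrow> (\<exists>V1 V2. V1 \<union> V2 = V \<and> V1 \<inter> V2 = {} \<and>
     is_clique E V1 \<and> union_of_cliques E V2)"

definition GSP :: "'a set \<Rightarrow> 'a set set \<Rightarrow> bool" where
  "GSP V E \<longleftrightarrow> split_form V E \<or> split_form V (compl_edges V E)"

definition transitive_orientation :: "'a set set \<Rightarrow> ('a \<times> 'a) set \<Rightarrow> bool" where
  "transitive_orientation F R \<longleftrightarrow>
     (\<forall>(u, v)\<in>R. {u, v} \<in> F) \<and>
     (\<forall>u v. u \<noteq> v \<longrightarrow> {u, v} \<in> F \<longrightarrow> ((u, v) \<in> R \<longleftrightarrow> (v, u) \<notin> R)) \<and>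
     trans R"

definition comparability :: "'a set set \<Rightarrow> bool" where
  "comparability F \<longleftrightarrow> (\<exists>R. transitive_orientation F R)"

definition p_num :: "'a set \<Rightarrow> 'a set set \<Rightarrow> nat" where
  "p_num V E = (LEAST m. \<exists>F :: nat \<Rightarrow> 'a set set.
      (\<forall>i<m. F i \<subseteq> E \<and> comparability (F i)) \<and>
      (\<forall>i<m. \<forall>j<m. i \<noteq> j \<longrightarrow> F i \<inter> F j = {}) \<and>
      (\<Union>i<m. F i) = E)"

end

theory Submission
  imports Defs
begin

definition edges_of :: "('a \<times> 'a) set \<Rightarrow> 'a set set" where
  "edges_of R = {{u, v} | u v. (u, v) \<in> R}"

lemma comparability_edges_of:
  assumes "trans R" and "\<And>u v. (u, v) \<in> R \<Longrightarrow> (v, u) \<notin> R"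
  shows "comparability (edges_of R)"
  unfolding comparability_def
proof (intro exI)
  show "transitive_orientation (edges_of R) R"
    unfolding transitive_orientation_def
  proof (intro conjI allI impI)
    show "\<forall>(u, v)\<in>R. {u, v} \<in> edges_of R" unfolding edges_of_def by blast
    show "trans R" by fact
  next
    fix u v assume "u \<noteq> v" "{u, v} \<in> edges_of R"
    then obtain a b where ab: "{u, v} = {a, b}" "(a, b) \<in> R" unfolding edges_of_def by blast
    then have "(u, v) \<in> R \<or> (v, u) \<in> R" by (auto simp: doubleton_eq_iff)
    then show "((u, v) \<in> R) = ((v, u) \<notin> R)" using assms(2) by blast
  qed
qed

lemma two_parts:
  assumes "trans R1" "\<And>u v. (u, v) \<in> R1 \<Longrightarrow> (v, u) \<notin> R1"
    and "trans R2" "\<And>u v. (u, v) \<in> R2 \<Longrightarrow> (v, u) \<notin> R2"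
    and "E = edges_of R1 \<union> edges_of R2"
    and "edges_of R1 \<inter> edges_of R2 = {}"
  shows "p_num V E \<le> 2"
proof -
  define F :: "nat \<Rightarrow> 'a set set" where "F = (\<lambda>i. if i = 0 then edges_of R1 else edges_of R2)"
  have c1: "comparability (edges_of R1)" using comparability_edges_of assms(1,2) by blast
  have c2: "comparability (edges_of R2)" using comparability_edges_of assms(3,4) by blast
  have "(\<forall>i<2. F i \<subseteq> E \<and> comparability (F i)) \<and>
      (\<forall>i<2. \<forall>j<2. i \<noteq> j \<longrightarrow> F i \<inter> F j = {}) \<and>
      (\<Union>i<2. F i) = E"
  proof (intro conjI allI impI)
    fix i :: nat assume "i < 2"
    then show "F i \<subseteq> E" "comparability (F i)" using c1 c2 assms(5) by (auto simp: F_def)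
  next
    fix i j :: nat assume "i < 2" "j < 2" "i \<noteq> j"
    then show "F i \<inter> F j = {}" using assms(6) by (auto simp: F_def less_2_cases_iff)
  next
    have "{..<2::nat} = {0, 1}" by auto
    then show "(\<Union>i<2. F i) = E" using assms(5) by (simp add: F_def Un_commute)
  qed
  then have "\<exists>F :: nat \<Rightarrow> 'a set set. (\<forall>i<2. F i \<subseteq> E \<and> comparability (F i)) \<and>
      (\<forall>i<2. \<forall>j<2. i \<noteq> j \<longrightarrow> F i \<inter> F j = {}) \<and>
      (\<Union>i<2. F i) = E" by blast
  then show ?thesis unfolding p_num_def by (rule Least_le)
qed

lemma case1:
  assumes fin: "finite V" and sg: "simple_graph V E" and sf: "split_form V E"
  shows "p_num V E \<le> 2"
proof -
  obtain V1 V2 where V: "V1 \<union> V2 = V" "V1 \<inter> V2 = {}" and c1: "is_clique E V1"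
    and u2: "union_of_cliques E V2" using sf unfolding split_form_def by blast
  obtain P where P: "\<Union>P = V2" "{} \<notin> P" "\<forall>A\<in>P. \<forall>B\<in>P. A \<noteq> B \<longrightarrow> A \<inter> B = {}"
    "\<forall>A\<in>P. is_clique E A" "\<forall>A\<in>P. \<forall>B\<in>P. A \<noteq> B \<longrightarrow> (\<forall>u\<in>A. \<forall>v\<in>B. {u, v} \<notin> E)"
    using u2 unfolding union_of_cliques_def by (elim exE conjE) (rule that)
  obtain f :: "'a \<Rightarrow> nat" and n where f: "inj_on f V" using finite_imp_inj_to_nat_seg[OF fin] by blast
  define R1 where "R1 = {(u, v). u \<in> V \<and> v \<in> V \<and> f u < f v \<and> ((u \<in> V1 \<and> v \<in> V1) \<or> (\<exists>A\<in>P. u \<in> A \<and> v \<in> A))}"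
  define R2 where "R2 = {(u, v). u \<in> V1 \<and> v \<in> V2 \<and> {u, v} \<in> E}"
  have blk: "A = B" if "A \<in> P" "B \<in> P" "v \<in> A" "v \<in> B" for A B v using P(3) that by blast
  have AV2: "A \<subseteq> V2" if "A \<in> P" for A using P(1) that by blast
  have t1: "trans R1"
  proof (rule transI)
    fix u v w assume uv: "(u, v) \<in> R1" and vw: "(v, w) \<in> R1"
    have o: "u \<in> V" "w \<in> V" "f u < f w" using uv vw unfolding R1_def by auto
    have c1: "(u \<in> V1 \<and> v \<in> V1) \<or> (\<exists>A\<in>P. u \<in> A \<and> v \<in> A)" using uv unfolding R1_def by auto
    have c2: "(v \<in> V1 \<and> w \<in> V1) \<or> (\<exists>A\<in>P. v \<in> A \<and> w \<in> A)" using vw unfolding R1_def by auto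
    have "(u \<in> V1 \<and> w \<in> V1) \<or> (\<exists>A\<in>P. u \<in> A \<and> w \<in> A)"
    proof (cases "v \<in> V1")
      case True
      then have "\<not> (\<exists>A\<in>P. v \<in> A)" using AV2 V(2) by blast
      then show ?thesis using c1 c2 by blast
    next
      case False
      then obtain A B where "A \<in> P" "u \<in> A" "v \<in> A" "B \<in> P" "v \<in> B" "w \<in> B" using c1 c2 by blast
      then show ?thesis using blk by blast
    qed
    then show "(u, w) \<in> R1" using o by (simp add: R1_def)
  qed
  have a1: "(v, u) \<notin> R1" if "(u, v) \<in> R1" for u v using that unfolding R1_def by auto
  have t2: "trans R2" unfolding trans_def R2_def using V by auto
  have a2: "(v, u) \<notin> R2" if "(u, v) \<in> R2" for u v using that V unfolding R2_def by auto
  have "E \<subseteq> edges_of R1 \<union> edges_of R2"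
  proof
    fix e assume "e \<in> E"
    then obtain a b where ab: "a \<in> V" "b \<in> V" "a \<noteq> b" "e = {a, b}" using sg unfolding simple_graph_def by blast
    have fab: "f a \<noteq> f b" using f ab(1-3) inj_on_eq_iff by metis
    have sw: "{b, a} = {a, b}" by auto
    show "e \<in> edges_of R1 \<union> edges_of R2"
    proof (cases "a \<in> V1")
      case True
      show ?thesis
      proof (cases "b \<in> V1")
        case True
        then have "(a, b) \<in> R1 \<or> (b, a) \<in> R1" using \<open>a \<in> V1\<close> ab fab unfolding R1_def by auto
        then show ?thesis unfolding edges_of_def using ab sw by blast
      next
        case False
        then have "(a, b) \<in> R2" using \<open>a \<in> V1\<close> ab V \<open>e \<in> E\<close> unfolding R2_def by auto
        then show ?thesis unfolding edges_of_def using ab by blast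
      qed
    next
      case False
      then have aV2: "a \<in> V2" using ab V by auto
      show ?thesis
      proof (cases "b \<in> V1")
        case True
        then have "(b, a) \<in> R2" using aV2 ab sw \<open>e \<in> E\<close> unfolding R2_def by auto
        then show ?thesis unfolding edges_of_def using ab sw by blast
      next
        case False
        then have bV2: "b \<in> V2" using ab V by auto
        obtain A B where AB: "A \<in> P" "B \<in> P" "a \<in> A" "b \<in> B" using aV2 bV2 P(1) by blast
        have "A = B" using P(5) AB ab \<open>e \<in> E\<close> by blast
        then have "(a, b) \<in> R1 \<or> (b, a) \<in> R1" using AB ab fab unfolding R1_def by auto
        then show ?thesis unfolding edges_of_def using ab sw by blast
      qed
    qed
  qed
  moreover have "edges_of R1 \<subseteq> E"
  proof
    fix e assume "e \<in> edges_of R1"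
    then obtain u v where uv: "e = {u, v}" "(u, v) \<in> R1" unfolding edges_of_def by blast
    then have "u \<noteq> v" unfolding R1_def by auto
    then show "e \<in> E" using uv c1 P(4) unfolding R1_def is_clique_def by auto
  qed
  moreover have "edges_of R2 \<subseteq> E" unfolding edges_of_def R2_def by auto
  moreover have "edges_of R1 \<inter> edges_of R2 = {}"
  proof (rule ccontr)
    assume "edges_of R1 \<inter> edges_of R2 \<noteq> {}"
    then obtain u v x y where "(u, v) \<in> R1" "(x, y) \<in> R2" "{u, v} = {x, y}" unfolding edges_of_def by blast
    then have xy: "x \<in> V1" "y \<in> V2" "x \<in> {u, v}" "y \<in> {u, v}" and
      c: "(u \<in> V1 \<and> v \<in> V1) \<or> (\<exists>A\<in>P. u \<in> A \<and> v \<in> A)"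
      unfolding R1_def R2_def by auto
    have uvV: "{u, v} \<subseteq> V1 \<or> {u, v} \<subseteq> V2" using c AV2 by blast
    show False
    proof (cases "{u, v} \<subseteq> V1")
      case True
      then have "y \<in> V1" using xy(4) by blast
      then show False using xy(2) V(2) by blast
    next
      case False
      then have "x \<in> V2" using uvV xy(3) by blast
      then show False using xy(1) V(2) by blast
    qed
  qed
  ultimately show ?thesis using two_parts[OF t1 a1 t2 a2] by blast
qed

lemma case2:
  assumes fin: "finite V" and sg: "simple_graph V E" and sf: "split_form V (compl_edges V E)"
  shows "p_num V E \<le> 2"
proof -
  let ?C = "compl_edges V E"
  have ce: "{u, v} \<in> ?C \<longleftrightarrow> {u, v} \<notin> E" if "u \<in> V" "v \<in> V" "u \<noteq> v" for u v
  proof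
    assume "{u, v} \<in> ?C"
    then obtain a b where "{u, v} = {a, b}" "{a, b} \<notin> E" unfolding compl_edges_def by blast
    then show "{u, v} \<notin> E" by simp
  next
    assume "{u, v} \<notin> E" then show "{u, v} \<in> ?C" using that unfolding compl_edges_def by blast
  qed
  obtain V1 V2 where V: "V1 \<union> V2 = V" "V1 \<inter> V2 = {}" and c1: "is_clique ?C V1"
    and u2: "union_of_cliques ?C V2" using sf unfolding split_form_def by blast
  obtain P where P: "\<Union>P = V2" "{} \<notin> P" "\<forall>A\<in>P. \<forall>B\<in>P. A \<noteq> B \<longrightarrow> A \<inter> B = {}"
    "\<forall>A\<in>P. is_clique ?C A" "\<forall>A\<in>P. \<forall>B\<in>P. A \<noteq> B \<longrightarrow> (\<forall>u\<in>A. \<forall>v\<in>B. {u, v} \<notin> ?C)"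
    using u2 unfolding union_of_cliques_def by (elim exE conjE) (rule that)
  have "finite V2" using V fin by auto
  then have "finite P" using P(1) finite_UnionD by blast
  then obtain g :: "'a set \<Rightarrow> nat" and n where g: "inj_on g P" using finite_imp_inj_to_nat_seg by blast
  define R1 where "R1 = {(u, v). \<exists>A\<in>P. \<exists>B\<in>P. u \<in> A \<and> v \<in> B \<and> g A < g B}"
  define R2 where "R2 = {(u, v). u \<in> V1 \<and> v \<in> V2 \<and> {u, v} \<in> E}"
  have blk: "A = B" if "A \<in> P" "B \<in> P" "v \<in> A" "v \<in> B" for A B v using P(3) that by blast
  have AV2: "A \<subseteq> V2" if "A \<in> P" for A using P(1) that by blast
  have t1: "trans R1"
  proof (rule transI)
    fix u v w assume uv: "(u, v) \<in> R1" and vw: "(v, w) \<in> R1"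
    obtain A B where AB: "A \<in> P" "B \<in> P" "u \<in> A" "v \<in> B" "g A < g B" using uv unfolding R1_def by auto
    obtain B' C where BC: "B' \<in> P" "C \<in> P" "v \<in> B'" "w \<in> C" "g B' < g C" using vw unfolding R1_def by auto
    have "B = B'" using blk AB BC by blast
    then have "g A < g C" using AB BC by simp
    then show "(u, w) \<in> R1" using AB BC unfolding R1_def by blast
  qed
  have a1: "(v, u) \<notin> R1" if uv0: "(u, v) \<in> R1" for u v
  proof
    assume vu: "(v, u) \<in> R1"
    obtain A B where AB: "A \<in> P" "B \<in> P" "u \<in> A" "v \<in> B" "g A < g B" using uv0 unfolding R1_def by auto
    obtain B' A' where BA: "B' \<in> P" "A' \<in> P" "v \<in> B'" "u \<in> A'" "g B' < g A'" using vu unfolding R1_def by auto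
    have "B = B'" "A = A'" using blk AB BA by blast+
    then show False using AB BA by simp
  qed
  have t2: "trans R2" unfolding trans_def R2_def using V by auto
  have a2: "(v, u) \<notin> R2" if "(u, v) \<in> R2" for u v using that V unfolding R2_def by auto
  have "E \<subseteq> edges_of R1 \<union> edges_of R2"
  proof
    fix e assume "e \<in> E"
    then obtain a b where ab: "a \<in> V" "b \<in> V" "a \<noteq> b" "e = {a, b}" using sg unfolding simple_graph_def by blast
    have sw: "{b, a} = {a, b}" by auto
    show "e \<in> edges_of R1 \<union> edges_of R2"
    proof (cases "a \<in> V1")
      case True
      show ?thesis
      proof (cases "b \<in> V1")
        case True
        then have "{a, b} \<in> ?C" using \<open>a \<in> V1\<close> c1 ab unfolding is_clique_def by blast
        then show ?thesis using ce ab \<open>e \<in> E\<close> by blast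
      next
        case False
        then have "(a, b) \<in> R2" using \<open>a \<in> V1\<close> ab V \<open>e \<in> E\<close> unfolding R2_def by auto
        then show ?thesis unfolding edges_of_def using ab by blast
      qed
    next
      case False
      then have aV2: "a \<in> V2" using ab V by auto
      show ?thesis
      proof (cases "b \<in> V1")
        case True
        then have "(b, a) \<in> R2" using aV2 ab sw \<open>e \<in> E\<close> unfolding R2_def by auto
        then show ?thesis unfolding edges_of_def using ab sw by blast
      next
        case False
        then have bV2: "b \<in> V2" using ab V by auto
        obtain A B where AB: "A \<in> P" "B \<in> P" "a \<in> A" "b \<in> B" using aV2 bV2 P(1) by blast
        have "A \<noteq> B"
        proof
          assume "A = B"
          then have "{a, b} \<in> ?C" using P(4) AB ab unfolding is_clique_def by blast
          then show False using ce ab \<open>e \<in> E\<close> by blast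
        qed
        then have "g A \<noteq> g B" using g AB unfolding inj_on_def by blast
        then have "(a, b) \<in> R1 \<or> (b, a) \<in> R1" using AB unfolding R1_def by (auto simp: neq_iff)
        then show ?thesis unfolding edges_of_def using ab sw by blast
      qed
    qed
  qed
  moreover have "edges_of R1 \<subseteq> E"
  proof
    fix e assume "e \<in> edges_of R1"
    then obtain u v where uv: "e = {u, v}" "(u, v) \<in> R1" unfolding edges_of_def by blast
    then obtain A B where AB: "A \<in> P" "B \<in> P" "u \<in> A" "v \<in> B" "g A < g B" unfolding R1_def by auto
    then have "A \<noteq> B" by auto
    then have "u \<noteq> v" "{u, v} \<notin> ?C" using AB P(3,5) by blast+
    moreover have "u \<in> V" "v \<in> V" using AB AV2 V by blast+
    ultimately show "e \<in> E" using uv ce by blast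
  qed
  moreover have "edges_of R2 \<subseteq> E" unfolding edges_of_def R2_def by auto
  moreover have "edges_of R1 \<inter> edges_of R2 = {}"
  proof (rule ccontr)
    assume "edges_of R1 \<inter> edges_of R2 \<noteq> {}"
    then obtain u v x y where "(u, v) \<in> R1" "(x, y) \<in> R2" "{u, v} = {x, y}" unfolding edges_of_def by blast
    then have xy: "x \<in> V1" "x \<in> {u, v}" and c: "\<exists>A\<in>P. \<exists>B\<in>P. u \<in> A \<and> v \<in> B"
      unfolding R1_def R2_def by auto
    then obtain A where "A \<in> P" "x \<in> A" by blast
    then show False using AV2 V(2) xy by blast
  qed
  ultimately show ?thesis using two_parts[OF t1 a1 t2 a2] by blast
qed

theorem theorem3:
  fixes V :: "'a set" and E :: "'a set set"
  assumes "simple_graph V E" and "GSP V E"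
  shows "p_num V E \<le> 2"
proof -
  have "finite V" using assms(1) unfolding simple_graph_def by blast
  then show ?thesis using assms case1 case2 unfolding GSP_def by blast
qed

end
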